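(* Let $\Omega\subset\mathbb{R}^n$ be a circumscribed convex polytope, i.e. a convex polytope with non-empty interior for which there exists a ball contained in $\Omega$ that meets every facet (side) of $\Omega$. Then for all $\varepsilon\in[0,\mathrm{In}(\Omega)]$, $$\mathrm{vol}(L_\varepsilon(\Omega))=\mathrm{vol}(\Omega)\left(1-\Big(1-\frac{\varepsilon}{\mathrm{In}(\Omega)}\Big)^{n}\right).$$
   Context: $\mathrm{vol}$ is $n$-dimensional Lebesgue measure. $\mathrm{In}(\Omega)$ is the inradius of $\Omega$: the radius of the largest ball contained in $\Omega$. The $\varepsilon$-inner neighbourhood is $L_\varepsilon(\Omega)=\{x\in\Omega:\|x-y\|\le\varepsilon\text{ for some }y\in\partial\Omega\}$. *)

theory Defs
  imports "HOL-Analysis.Analysis"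
begin

definition inradius :: "'a::euclidean_space set \<Rightarrow> real" where
  "inradius S = Sup {r. r \<ge> 0 \<and> (\<exists>x. cball x r \<subseteq> S)}"

definition inner_nbhd :: "real \<Rightarrow> 'a::euclidean_space set \<Rightarrow> 'a set" where
  "inner_nbhd e S = {x \<in> S. \<exists>y \<in> frontier S. dist x y \<le> e}"

definition circumscribed_polytope :: "'a::euclidean_space set \<Rightarrow> bool" where
  "circumscribed_polytope P \<longleftrightarrow> polytope P \<and> interior P \<noteq> {} \<and>
     (\<exists>c r. r > 0 \<and> cball c r \<subseteq> P \<and> (\<forall>F. F facet_of P \<longrightarrow> cball c r \<inter> F \<noteq> {}))"

end

theory Submission
  imports Defs
begin


locale hs =
  fixes P :: "'a::euclidean_space set" and F :: "'b set" and u :: "'b \<Rightarrow> 'a" and c :: 'a and r :: real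
  assumes finF: "finite F" and nu: "\<And>h. h \<in> F \<Longrightarrow> norm (u h) = 1"
    and rpos: "r > 0" and Peq: "P = {x. \<forall>h\<in>F. u h \<bullet> (x - c) \<le> r}" and bP: "bounded P"
begin

lemma dir: "\<exists>h\<in>F. u h \<bullet> v \<ge> 0"
proof (rule ccontr)
  assume "\<not> ?thesis"
  then have neg: "\<And>h. h \<in> F \<Longrightarrow> u h \<bullet> v < 0" by auto
  show False
  proof (cases "v = 0")
    case True
    then have "F = {}" using neg by fastforce
    then have "P = UNIV" using Peq by auto
    then show False using bP by simp
  next
    case False
    obtain B where B: "\<And>x. x \<in> P \<Longrightarrow> norm x \<le> B" using bP bounded_iff by blast
    define t where "t = (B + norm c + 1) / norm v"
    have "c \<in> P" using Peq rpos by auto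
    then have "norm c \<le> B" by (rule B)
    then have tpos: "t \<ge> 0" unfolding t_def by (smt (verit) divide_nonneg_nonneg norm_ge_zero)
    have "c + t *\<^sub>R v \<in> P" unfolding Peq
    proof (safe)
      fix h assume "h \<in> F"
      have "u h \<bullet> (c + t *\<^sub>R v - c) = t * (u h \<bullet> v)" by (simp add: inner_scaleR_right)
      also have "\<dots> \<le> 0" using neg[OF \<open>h\<in>F\<close>] tpos by (simp add: mult_nonneg_nonpos)
      finally show "u h \<bullet> (c + t *\<^sub>R v - c) \<le> r" using rpos by linarith
    qed
    then have "norm (c + t *\<^sub>R v) \<le> B" by (rule B)
    moreover have pB: "B + norm c + 1 > 0" using \<open>norm c \<le> B\<close> norm_ge_zero[of c] by linarith
    moreover have "norm (t *\<^sub>R v) = B + norm c + 1" using False pB by (simp add: t_def)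
    moreover have "norm (t *\<^sub>R v) \<le> norm (c + t *\<^sub>R v) + norm c"
      by (metis add_diff_cancel_left' norm_triangle_ineq4 add.commute)
    ultimately show False by linarith
  qed
qed

lemma cball_sub: "cball c r \<subseteq> P"
proof
  fix x assume "x \<in> cball c r"
  then have "norm (x - c) \<le> r" by (simp add: dist_norm norm_minus_commute)
  show "x \<in> P" unfolding Peq
  proof safe
    fix h assume "h \<in> F"
    have "u h \<bullet> (x - c) \<le> norm (u h) * norm (x - c)" by (rule norm_cauchy_schwarz)
    then show "u h \<bullet> (x - c) \<le> r" using nu[OF \<open>h \<in> F\<close>] \<open>norm (x - c) \<le> r\<close> by simp
  qed
qed

lemma inrad: "inradius P = r"
  unfolding inradius_def
proof (rule cSup_eq_maximum)
  show "r \<in> {r. 0 \<le> r \<and> (\<exists>x. cball x r \<subseteq> P)}" using cball_sub rpos by auto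
  fix \<rho> assume "\<rho> \<in> {r. 0 \<le> r \<and> (\<exists>x. cball x r \<subseteq> P)}"
  then obtain x where "\<rho> \<ge> 0" "cball x \<rho> \<subseteq> P" by auto
  obtain h where h: "h \<in> F" "u h \<bullet> (x - c) \<ge> 0" using dir by blast
  have "x + \<rho> *\<^sub>R u h \<in> cball x \<rho>" using nu[OF h(1)] \<open>\<rho> \<ge> 0\<close> by (simp add: dist_norm)
  then have "x + \<rho> *\<^sub>R u h \<in> P" using \<open>cball x \<rho> \<subseteq> P\<close> by blast
  then have "u h \<bullet> (x + \<rho> *\<^sub>R u h - c) \<le> r" using h Peq by auto
  moreover have "u h \<bullet> (x + \<rho> *\<^sub>R u h - c) = u h \<bullet> (x - c) + \<rho>"
  proof -
    have "u h \<bullet> u h = 1" using nu[OF h(1)] by (simp add: power2_norm_eq_inner[symmetric])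
    then show ?thesis by (simp add: inner_diff_right inner_add_right inner_scaleR_right)
  qed
  ultimately show "\<rho> \<le> r" using h by linarith
qed

lemma closedP: "closed P"
proof -
  have "P = (\<Inter>h\<in>F. {x. u h \<bullet> x \<le> r + u h \<bullet> c})" unfolding Peq
    by (auto simp: inner_diff_right algebra_simps)
  then show ?thesis by (auto intro!: closed_INT closed_halfspace_le)
qed

definition "G0 = {y. \<forall>h\<in>F. u h \<bullet> (y - c) < r}"

lemma openG0: "open G0"
proof -
  have "G0 = (\<Inter>h\<in>F. {x. u h \<bullet> x < r + u h \<bullet> c})" unfolding G0_def
    by (auto simp: inner_diff_right algebra_simps)
  then show ?thesis using finF by (auto intro!: open_INT open_halfspace_lt)
qed

lemma G0_sub: "G0 \<subseteq> P" unfolding G0_def Peq by fastforce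

lemma G0_int: "G0 \<subseteq> interior P" by (rule interior_maximal[OF G0_sub openG0])

lemma front_hp:
  assumes "y \<in> P" "h \<in> F" "u h \<bullet> (y - c) = r"
  shows "y \<in> frontier P"
proof -
  have "y \<notin> interior P"
  proof
    assume "y \<in> interior P"
    then obtain d where d: "d > 0" "ball y d \<subseteq> P" by (meson open_contains_ball open_interior interior_subset subset_trans)
    have "y + (d/2) *\<^sub>R u h \<in> ball y d" using d nu[OF assms(2)] by (simp add: dist_norm)
    then have "y + (d/2) *\<^sub>R u h \<in> P" using d by blast
    then have "u h \<bullet> (y + (d/2) *\<^sub>R u h - c) \<le> r" using assms(2) Peq by auto
    moreover have "u h \<bullet> u h = 1" using nu[OF assms(2)] by (simp add: power2_norm_eq_inner[symmetric])
    ultimately show False using assms(3) d by (simp add: inner_diff_right inner_add_right)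
  qed
  then show ?thesis using assms(1) closedP by (simp add: frontier_def closure_closed)
qed

lemma nbhd_eq:
  assumes e: "0 \<le> e" "e \<le> r"
  shows "inner_nbhd e P = P - {x. \<forall>h\<in>F. u h \<bullet> (x - c) < r - e}"
proof (intro set_eqI iffI)
  fix x assume "x \<in> inner_nbhd e P"
  then obtain y where x: "x \<in> P" and y: "y \<in> frontier P" "dist x y \<le> e" unfolding inner_nbhd_def by auto
  have "x \<notin> {x. \<forall>h\<in>F. u h \<bullet> (x - c) < r - e}"
  proof
    assume xG: "x \<in> {x. \<forall>h\<in>F. u h \<bullet> (x - c) < r - e}"
    have "y \<in> G0" unfolding G0_def
    proof safe
      fix h assume h: "h \<in> F"
      have "u h \<bullet> (y - x) \<le> norm (u h) * norm (y - x)" by (rule norm_cauchy_schwarz)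
      also have "\<dots> \<le> e" using nu[OF h] y(2) by (simp add: dist_norm norm_minus_commute)
      finally have "u h \<bullet> (y - x) \<le> e" .
      moreover have "u h \<bullet> (y - c) = u h \<bullet> (x - c) + u h \<bullet> (y - x)" by (simp add: inner_diff_right)
      ultimately show "u h \<bullet> (y - c) < r" using xG h by force
    qed
    then have "y \<in> interior P" using G0_int by blast
    then show False using y(1) by (simp add: frontier_def)
  qed
  then show "x \<in> P - {x. \<forall>h\<in>F. u h \<bullet> (x - c) < r - e}" using x by blast
next
  fix x assume "x \<in> P - {x. \<forall>h\<in>F. u h \<bullet> (x - c) < r - e}"
  then obtain h where x: "x \<in> P" and h: "h \<in> F" "u h \<bullet> (x - c) \<ge> r - e" by auto
  have le: "u h \<bullet> (x - c) \<le> r" using x h Peq by auto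
  define s where "s = r - u h \<bullet> (x - c)"
  define y where "y = x + s *\<^sub>R u h"
  have s: "0 \<le> s" "s \<le> e" using le h by (auto simp: s_def)
  have uu: "u h \<bullet> u h = 1" using nu[OF h(1)] by (simp add: power2_norm_eq_inner[symmetric])
  have yr: "u h \<bullet> (y - c) = r" using uu by (simp add: y_def s_def inner_diff_right inner_add_right)
  have dxy: "dist x y = s" using s nu[OF h(1)] by (simp add: y_def dist_norm)
  have "\<exists>z\<in>frontier P. dist x z \<le> e"
  proof (cases "y \<in> P")
    case True
    then show ?thesis using front_hp[OF True h(1) yr] dxy s by auto
  next
    case False
    have "closed_segment x y \<inter> frontier P \<noteq> {}"
      by (rule connected_Int_frontier) (use x False in auto)
    then obtain z where z: "z \<in> closed_segment x y" "z \<in> frontier P" by auto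
    have "dist z x \<le> dist x y" using dist_in_closed_segment[OF z(1)] by simp
    then have "dist x z \<le> e" using dxy s by (simp add: dist_commute)
    then show ?thesis using z(2) by blast
  qed
  then show "x \<in> inner_nbhd e P" using x unfolding inner_nbhd_def by auto
qed

lemma measG0: "measure lebesgue G0 = measure lebesgue P"
proof (rule measure_negligible_symdiff)
  show "P \<in> lmeasurable" using closedP bP by (simp add: lmeasurable_compact compact_eq_bounded_closed)
  have "P - G0 \<union> (G0 - P) \<subseteq> \<Union>((\<lambda>h. {x. u h \<bullet> x = r + u h \<bullet> c}) ` F)"
  proof
    fix x assume "x \<in> P - G0 \<union> (G0 - P)"
    then have "x \<in> P" "x \<notin> G0" using G0_sub by auto
    then obtain h where "h \<in> F" "u h \<bullet> (x - c) = r" unfolding Peq G0_def by force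
    then show "x \<in> \<Union>((\<lambda>h. {x. u h \<bullet> x = r + u h \<bullet> c}) ` F)" by (auto simp: inner_diff_right intro!: bexI[of _ h])
  qed
  moreover have "negligible (\<Union>((\<lambda>h. {x. u h \<bullet> x = r + u h \<bullet> c}) ` F))"
  proof (rule negligible_Union)
    show "finite ((\<lambda>h. {x. u h \<bullet> x = r + u h \<bullet> c}) ` F)" using finF by simp
  next
    fix T assume "T \<in> (\<lambda>h. {x. u h \<bullet> x = r + u h \<bullet> c}) ` F"
    then obtain h where "h \<in> F" "T = {x. u h \<bullet> x = r + u h \<bullet> c}" by auto
    moreover have "u h \<noteq> 0" using nu[OF \<open>h \<in> F\<close>] by auto
    ultimately show "negligible T" using negligible_hyperplane by blast
  qed
  ultimately show "negligible (P - G0 \<union> (G0 - P))" by (rule negligible_subset[rotated])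
qed

lemma meas:
  assumes e: "0 \<le> e" "e \<le> r"
  shows "measure lebesgue (inner_nbhd e P) = measure lebesgue P * (1 - (1 - e / r) ^ DIM('a))"
proof -
  define G where "G = {x. \<forall>h\<in>F. u h \<bullet> (x - c) < r - e}"
  define t where "t = 1 - e / r"
  have t: "0 \<le> t" "t \<le> 1" "t * r = r - e" using e rpos by (auto simp: t_def field_simps)
  have GP: "G \<subseteq> P" unfolding G_def Peq using e by fastforce
  have openG: "open G"
  proof -
    have "G = (\<Inter>h\<in>F. {x. u h \<bullet> x < r - e + u h \<bullet> c})" unfolding G_def
      by (auto simp: inner_diff_right algebra_simps)
    then show ?thesis using finF by (auto intro!: open_INT open_halfspace_lt)
  qed
  have Pm: "P \<in> lmeasurable" using closedP bP by (simp add: lmeasurable_compact compact_eq_bounded_closed)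
  have Gm: "G \<in> sets lebesgue" using lmeasurable_open[OF bounded_subset[OF bP GP] openG] by (simp add: fmeasurableD)
  have mG: "measure lebesgue G = t ^ DIM('a) * measure lebesgue P"
  proof (cases "t = 0")
    case True
    have "G = {}"
    proof (rule ccontr)
      assume "G \<noteq> {}"
      then obtain x where "x \<in> G" by auto
      obtain h where "h \<in> F" "u h \<bullet> (x - c) \<ge> 0" using dir by blast
      then show False using \<open>x \<in> G\<close> t(3) True unfolding G_def by force
    qed
    then show ?thesis using True by simp
  next
    case False
    then have tp: "t > 0" using t by simp
    have "G = (\<lambda>y. t *\<^sub>R y + (1 - t) *\<^sub>R c) ` G0"
    proof (intro set_eqI iffI)
      fix x assume "x \<in> G"
      define y where "y = c + (1/t) *\<^sub>R (x - c)"
      have "x = t *\<^sub>R y + (1 - t) *\<^sub>R c" using tp by (simp add: y_def algebra_simps)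
      moreover have "y \<in> G0" unfolding G0_def
      proof safe
        fix h assume "h \<in> F"
        then have "u h \<bullet> (x - c) < t * r" using \<open>x \<in> G\<close> t unfolding G_def by auto
        moreover have "u h \<bullet> (y - c) = (u h \<bullet> (x - c)) / t" by (simp add: y_def)
        ultimately show "u h \<bullet> (y - c) < r" using tp by (simp add: pos_divide_less_eq mult.commute)
      qed
      ultimately show "x \<in> (\<lambda>y. t *\<^sub>R y + (1 - t) *\<^sub>R c) ` G0" by blast
    next
      fix x assume "x \<in> (\<lambda>y. t *\<^sub>R y + (1 - t) *\<^sub>R c) ` G0"
      then obtain y where y: "y \<in> G0" "x = t *\<^sub>R y + (1 - t) *\<^sub>R c" by auto
      have xc: "x - c = t *\<^sub>R (y - c)" using y(2) by (simp add: algebra_simps)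
      show "x \<in> G" unfolding G_def
      proof safe
        fix h assume "h \<in> F"
        then have "u h \<bullet> (y - c) < r" using y(1) unfolding G0_def by auto
        then have "t * (u h \<bullet> (y - c)) < t * r" using tp by simp
        then show "u h \<bullet> (x - c) < r - e" using xc t by simp
      qed
    qed
    then show ?thesis using measure_lebesgue_affine[of t "(1 - t) *\<^sub>R c" G0] measG0 tp by simp
  qed
  have "inner_nbhd e P = P - G" using nbhd_eq[OF e] by (simp add: G_def)
  then have "measure lebesgue (inner_nbhd e P) = measure lebesgue P - measure lebesgue G"
    using measurable_measure_Diff[OF Pm Gm GP] by simp
  then show ?thesis using mG by (simp add: t_def algebra_simps)
qed

end


theorem mainTheorem4:
  fixes P :: "'a::euclidean_space set" and e :: real
  assumes "circumscribed_polytope P"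
    and "0 \<le> e" and "e \<le> inradius P"
  shows "measure lebesgue (inner_nbhd e P)
           = measure lebesgue P * (1 - (1 - e / inradius P) ^ DIM('a))"
proof -
  have poly: "polytope P" and intP: "interior P \<noteq> {}" using assms(1) by (auto simp: circumscribed_polytope_def)
  obtain c r where r: "r > 0" "cball c r \<subseteq> P" and meet: "\<And>G. G facet_of P \<Longrightarrow> cball c r \<inter> G \<noteq> {}"
    using assms(1) by (auto simp: circumscribed_polytope_def)
  have aff: "affine hull P = UNIV" by (rule affine_hull_nonempty_interior[OF intP])
  obtain F where finF: "finite F" and seq: "P = affine hull P \<inter> \<Inter>F"
    and hs: "\<forall>h \<in> F. \<exists>a b. a \<noteq> 0 \<and> h = {x. a \<bullet> x \<le> b}"
    and psub: "\<And>F'. F' \<subset> F \<Longrightarrow> P \<subset> affine hull P \<inter> \<Inter>F'"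
    using polytope_imp_polyhedron[OF poly] unfolding polyhedron_Int_affine_minimal by blast
  obtain a b where ab: "\<And>h. h \<in> F \<Longrightarrow> a h \<noteq> 0 \<and> h = {x. a h \<bullet> x \<le> b h}"
    using hs by metis
  have facet: "P \<inter> {x. a h \<bullet> x = b h} facet_of P" if "h \<in> F" for h
    using facet_of_polyhedron_explicit[OF finF seq ab psub] that by blast
  have Peq0: "P = \<Inter>F" using seq aff by simp
  have bh: "b h = a h \<bullet> c + r * norm (a h)" if h: "h \<in> F" for h
  proof -
    have an: "a h \<noteq> 0" using ab[OF h] by simp
    define z where "z = c + (r / norm (a h)) *\<^sub>R a h"
    have "z \<in> cball c r" using an r by (simp add: z_def dist_norm)
    then have "z \<in> h" using r(2) Peq0 h by blast
    then have "a h \<bullet> z \<le> b h" using ab[OF h] by blast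
    moreover have "a h \<bullet> z = a h \<bullet> c + r * norm (a h)"
      using an by (simp add: z_def inner_add_right power2_norm_eq_inner[symmetric] power2_eq_square)
    ultimately have 1: "a h \<bullet> c + r * norm (a h) \<le> b h" by simp
    obtain y where y: "y \<in> cball c r" "a h \<bullet> y = b h" using meet[OF facet[OF h]] by blast
    have "a h \<bullet> (y - c) \<le> norm (a h) * norm (y - c)" by (rule norm_cauchy_schwarz)
    also have "\<dots> \<le> norm (a h) * r" using y(1) by (intro mult_left_mono) (auto simp: dist_norm norm_minus_commute)
    finally have "b h \<le> a h \<bullet> c + r * norm (a h)" using y(2) by (simp add: inner_diff_right mult.commute)
    with 1 show ?thesis by simp
  qed
  define u where "u h = a h /\<^sub>R norm (a h)" for h
  have nu: "norm (u h) = 1" if "h \<in> F" for h using ab[OF that] by (simp add: u_def)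
  have Peq: "P = {x. \<forall>h\<in>F. u h \<bullet> (x - c) \<le> r}"
  proof -
    have "x \<in> h \<longleftrightarrow> u h \<bullet> (x - c) \<le> r" if h: "h \<in> F" for h x
    proof -
      have an: "norm (a h) > 0" using ab[OF h] by simp
      have hh: "h = {x. a h \<bullet> x \<le> b h}" using ab[OF h] by blast
      have "x \<in> h \<longleftrightarrow> x \<in> {x. a h \<bullet> x \<le> b h}" using hh by (rule arg_cong[where f="\<lambda>s. x \<in> s"])
      also have "\<dots> \<longleftrightarrow> a h \<bullet> (x - c) \<le> r * norm (a h)" using bh[OF h] by (simp add: inner_diff_right, linarith)
      also have "\<dots> \<longleftrightarrow> (a h \<bullet> (x - c)) / norm (a h) \<le> r" using an by (simp add: pos_divide_le_eq)
      also have "\<dots> \<longleftrightarrow> u h \<bullet> (x - c) \<le> r" by (simp add: u_def divide_inverse mult.commute)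
      finally show ?thesis .
    qed
    then show ?thesis using Peq0 by auto
  qed
  interpret hs P F u c r
    using finF nu r(1) Peq polytope_imp_bounded[OF poly] by unfold_locales auto
  show ?thesis using meas inrad assms(2,3) by simp
qed

end
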